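(* Let $M\in S_d^+$ and let $\mathcal T$ be an $M$-reduced mesh. Let $z\in\mathbb Z^d$. Then there exists $T\in\mathcal T$ with $-z\in\mathbb R_+T:=\{rx;\ r\ge0,\ x\in T\}$; and for any $T\in\mathcal T$ with $-z\in\mathbb R_+T$, denoting by $v_1,\dots,v_d$ the non-zero vertices of $T$, there exist non-negative integers $\beta_1,\dots,\beta_d$ such that $z+\beta_1v_1+\dots+\beta_dv_d=0$.
   Context: $S_d^+$ is the set of $d\times d$ symmetric positive definite matrices; $\langle u,v\rangle_M:=u^TMv$. An $M$-reduced mesh is a finite conforming mesh $\mathcal T$ of simplices in $\mathbb R^d$ such that: (I) the union of its simplices is a neighborhood of the origin; (II) the vertices of each $T\in\mathcal T$ lie in $\mathbb Z^d$ and $T$ has volume $1/d!$; (III) each $T\in\mathcal T$ has the origin as a vertex, and its other vertices $v_1,\dots,v_d$ satisfy $\langle v_i,v_j\rangle_M\ge0$ for all $i,j$. *)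

theory Defs
  imports "HOL-Analysis.Analysis"
begin

definition sym_pos_def :: "real^'n^'n \<Rightarrow> bool" where
  "sym_pos_def M \<longleftrightarrow> transpose M = M \<and> (\<forall>x. x \<noteq> 0 \<longrightarrow> x \<bullet> (M *v x) > 0)"

definition mdot :: "real^'n^'n \<Rightarrow> real^'n \<Rightarrow> real^'n \<Rightarrow> real" where
  "mdot M u v = u \<bullet> (M *v v)"

definition integer_vec :: "real^'n \<Rightarrow> bool" where
  "integer_vec v \<longleftrightarrow> (\<forall>i. v $ i \<in> \<int>)"

text \<open>A simplex is represented by its vertex set: d+1 affinely independent points;
  the simplex itself is the convex hull.\<close>
definition is_simplex_verts :: "(real^'n) set \<Rightarrow> bool" where
  "is_simplex_verts V \<longleftrightarrow> finite V \<and> card V = CARD('n) + 1 \<and> \<not> affine_dependent V"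

definition conforming_mesh :: "(real^'n) set set \<Rightarrow> bool" where
  "conforming_mesh \<T> \<longleftrightarrow> finite \<T> \<and> (\<forall>V\<in>\<T>. is_simplex_verts V) \<and>
     (\<forall>V\<in>\<T>. \<forall>W\<in>\<T>. convex hull V \<inter> convex hull W = convex hull (V \<inter> W))"

definition M_reduced_mesh :: "real^'n^'n \<Rightarrow> (real^'n) set set \<Rightarrow> bool" where
  "M_reduced_mesh M \<T> \<longleftrightarrow> conforming_mesh \<T> \<and>
     (0::real^'n) \<in> interior (\<Union>V\<in>\<T>. convex hull V) \<and>
     (\<forall>V\<in>\<T>. (\<forall>v\<in>V. integer_vec v) \<and>
        measure lebesgue (convex hull V) = 1 / fact CARD('n)) \<and>
     (\<forall>V\<in>\<T>. 0 \<in> V \<and> (\<forall>u\<in>V - {0}. \<forall>w\<in>V - {0}. mdot M u w \<ge> 0))"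

definition pos_cone :: "(real^'n) set \<Rightarrow> (real^'n) set" where
  "pos_cone T = {r *\<^sub>R x | r x. r \<ge> 0 \<and> x \<in> T}"

end

theory Submission
  imports Defs
begin

typedef 'a wo = "UNIV :: 'a set" by auto

instance wo :: (finite) finite
proof
  have "(UNIV :: 'a wo set) = Abs_wo ` UNIV"
    using type_definition.Abs_image[OF type_definition_wo] by auto
  then show "finite (UNIV :: 'a wo set)" by (metis finite_imageI finite_class.finite_UNIV)
qed

definition enc :: "'a::finite \<Rightarrow> nat" where "enc = (SOME f. inj f)"

lemma inj_enc: "inj (enc :: 'a::finite \<Rightarrow> nat)"
proof -
  obtain f :: "'a \<Rightarrow> nat" and n where "inj_on f UNIV"
    using finite_imp_inj_to_nat_seg[of "UNIV :: 'a set"] by auto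
  then have "\<exists>f::'a \<Rightarrow> nat. inj f" by blast
  then show ?thesis unfolding enc_def by (rule someI_ex)
qed

instantiation wo :: (finite) wellorder
begin
definition less_eq_wo :: "'a wo \<Rightarrow> 'a wo \<Rightarrow> bool" where
  "less_eq_wo x y \<longleftrightarrow> enc (Rep_wo x) \<le> enc (Rep_wo y)"
definition less_wo :: "'a wo \<Rightarrow> 'a wo \<Rightarrow> bool" where
  "less_wo x y \<longleftrightarrow> enc (Rep_wo x) < enc (Rep_wo y)"
instance
proof
  have inj: "enc (Rep_wo x) = enc (Rep_wo y) \<Longrightarrow> x = y" for x y :: "'a wo"
    using inj_enc Rep_wo_inject by (metis injD)
  fix x y z :: "'a wo"
  show "(x < y) = (x \<le> y \<and> \<not> y \<le> x)" unfolding less_eq_wo_def less_wo_def by auto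
  show "x \<le> x" unfolding less_eq_wo_def by auto
  show "x \<le> y \<Longrightarrow> y \<le> z \<Longrightarrow> x \<le> z" unfolding less_eq_wo_def by auto
  show "x \<le> y \<Longrightarrow> y \<le> x \<Longrightarrow> x = y" unfolding less_eq_wo_def using inj by auto
  show "x \<le> y \<or> y \<le> x" unfolding less_eq_wo_def by auto
next
  fix P :: "'a wo \<Rightarrow> bool" and a :: "'a wo"
  assume IH: "\<And>x. (\<And>y. y < x \<Longrightarrow> P y) \<Longrightarrow> P x"
  have "\<forall>x. enc (Rep_wo x) = n \<longrightarrow> P x" for n
  proof (induction n rule: less_induct)
    case (less n)
    then show ?case using IH unfolding less_wo_def by blast
  qed
  then show "P a" by blast
qed
end

definition phi :: "real^'n \<Rightarrow> real^('n wo)" where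
  "phi x = (\<chi> i. x $ Rep_wo i)"
definition psi :: "real^('n wo) \<Rightarrow> real^'n" where
  "psi y = (\<chi> j. y $ Abs_wo j)"

lemma phi_nth[simp]: "phi x $ i = x $ Rep_wo i" by (simp add: phi_def)
lemma psi_nth[simp]: "psi y $ j = y $ Abs_wo j" by (simp add: psi_def)
lemma phi_psi[simp]: "phi (psi y) = y" by (simp add: vec_eq_iff Rep_wo_inverse)
lemma psi_phi[simp]: "psi (phi x) = x" by (simp add: vec_eq_iff Abs_wo_inverse)
lemma linear_phi: "linear phi"
  by (rule linearI) (simp_all add: vec_eq_iff)
lemma inj_phi: "inj phi" by (metis injI psi_phi)

lemma prod_Basis_cart: "(\<Prod>b\<in>(Basis :: (real^'n) set). g b) = (\<Prod>i\<in>UNIV. g (axis i 1))"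
proof -
  have "(Basis :: (real^'n) set) = (\<lambda>i. axis i 1) ` UNIV" by (auto simp: Basis_vec_def)
  moreover have "inj (\<lambda>i::'n. axis i (1::real))" by (auto intro!: injI simp: axis_eq_axis)
  ultimately show ?thesis using prod.reindex[of "\<lambda>i::'n. axis i (1::real)" UNIV g] by (simp add: o_def)
qed

lemma lborel_wo: "(lborel :: (real^('n::finite wo)) measure) = distr lborel borel (phi :: real^'n \<Rightarrow> _)"
proof (rule lborel_eqI)
  have meas: "phi \<in> borel_measurable (lborel :: (real^'n) measure)"
  proof -
    have "phi \<in> borel_measurable (borel :: (real^'n) measure)"
      by (rule borel_measurable_continuous_onI, rule linear_continuous_on)
         (use linear_phi linear_conv_bounded_linear in blast)
    then show ?thesis by simp
  qed
  fix l u :: "real^('n wo)"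
  assume le: "\<And>b. b \<in> Basis \<Longrightarrow> l \<bullet> b \<le> u \<bullet> b"
  have le': "l $ i \<le> u $ i" for i
  proof -
    have "axis i 1 \<in> (Basis :: (real^('n wo)) set)" by (auto simp: Basis_vec_def)
    from le[OF this] show ?thesis by (simp add: cart_eq_inner_axis)
  qed
  have pre: "phi -` box l u = box (psi l) (psi u)"
    by (auto simp: mem_box_cart) (metis Abs_wo_inverse UNIV_I Rep_wo_inverse)+
  have "emeasure (distr lborel borel phi) (box l u) = emeasure lborel (box (psi l) (psi u))"
    using meas by (simp add: emeasure_distr pre)
  also have "\<dots> = (\<Prod>i\<in>UNIV. ennreal (u $ Abs_wo i - l $ Abs_wo i))"
  proof -
    have "\<forall>b\<in>Basis. psi l \<bullet> b \<le> psi u \<bullet> b"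
      using le' by (auto simp: Basis_vec_def inner_axis)
    then show ?thesis
      using le' by (simp add: emeasure_lborel_box_eq prod_Basis_cart inner_axis prod_ennreal)
  qed
  also have "\<dots> = (\<Prod>j\<in>UNIV. ennreal (u $ j - l $ j))"
  proof -
    have "bij_betw Abs_wo (UNIV :: 'n set) UNIV"
      by (metis Abs_wo_inverse UNIV_I bij_betw_byWitness Rep_wo_inverse subset_UNIV)
    then show ?thesis by (rule prod.reindex_bij_betw)
  qed
  also have "\<dots> = (\<Prod>b\<in>Basis. (u - l) \<bullet> b)"
    using le' by (simp add: prod_Basis_cart inner_axis prod_ennreal)
  finally show "emeasure (distr lborel borel phi) (box l u) = (\<Prod>b\<in>Basis. (u - l) \<bullet> b)" .
qed simp

lemma measure_phi:
  assumes "S \<in> sets borel"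
  shows "measure lborel (phi ` S) = measure lborel (S :: (real^'n::finite) set)"
proof -
  have meas: "phi \<in> borel_measurable (lborel :: (real^'n) measure)"
  proof -
    have "phi \<in> borel_measurable (borel :: (real^'n) measure)"
      by (rule borel_measurable_continuous_onI, rule linear_continuous_on)
         (use linear_phi linear_conv_bounded_linear in blast)
    then show ?thesis by simp
  qed
  have img: "phi ` S = psi -` S"
  proof (rule set_eqI)
    fix x show "x \<in> phi ` S \<longleftrightarrow> x \<in> psi -` S"
      by (metis imageE imageI phi_psi psi_phi vimage_eq)
  qed
  have psim: "psi \<in> borel_measurable (borel :: (real^'n wo) measure)"
  proof (rule borel_measurable_continuous_onI, rule linear_continuous_on)
    have "linear (psi :: _ \<Rightarrow> real^'n)" by (auto intro!: linearI simp: vec_eq_iff)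
    then show "bounded_linear (psi :: _ \<Rightarrow> real^'n)" using linear_conv_bounded_linear by blast
  qed
  have sb: "phi ` S \<in> sets borel"
    using measurable_sets[OF psim assms] by (simp add: img)
  have "measure lborel (phi ` S) = measure (distr lborel borel phi) (phi ` S)"
    by (simp add: lborel_wo[where 'n='n])
  also have "\<dots> = measure lborel (phi -` (phi ` S))"
    using meas sb by (simp add: measure_distr)
  also have "phi -` (phi ` S) = S" by (rule inj_vimage_image_eq[OF inj_phi])
  finally show ?thesis .
qed

lemma bij_Abs_wo: "bij_betw Abs_wo (UNIV :: 'n set) UNIV"
  by (metis Abs_wo_inverse UNIV_I bij_betw_byWitness Rep_wo_inverse subset_UNIV)

lemma card_wo: "CARD('n::finite wo) = CARD('n)"
  using bij_betw_same_card[OF bij_Abs_wo[where 'n='n]] by simp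

lemma det_Ints:
  fixes Q :: "real^'m^'m"
  assumes "\<And>i j. Q $ i $ j \<in> \<int>"
  shows "det Q \<in> \<int>"
  unfolding det_def using assms
  by (intro Ints_sum Ints_mult Ints_prod) auto

theorem lemma1p5:
  fixes M :: "real^'n^'n" and \<T> :: "(real^'n) set set" and z :: "real^'n"
  assumes "sym_pos_def M"
    and "M_reduced_mesh M \<T>"
    and "integer_vec z"
  shows "(\<exists>V\<in>\<T>. - z \<in> pos_cone (convex hull V)) \<and>
         (\<forall>V\<in>\<T>. - z \<in> pos_cone (convex hull V) \<longrightarrow>
            (\<exists>\<beta> :: real^'n \<Rightarrow> nat. z + (\<Sum>v\<in>V - {0}. real (\<beta> v) *\<^sub>R v) = 0))"
proof -
  from assms(2) have conf: "conforming_mesh \<T>"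
    and int0: "0 \<in> interior (\<Union>V\<in>\<T>. convex hull V)"
    and vol: "\<forall>V\<in>\<T>. (\<forall>v\<in>V. integer_vec v) \<and> measure lebesgue (convex hull V) = 1 / fact CARD('n)"
    and zero: "\<forall>V\<in>\<T>. 0 \<in> V"
    unfolding M_reduced_mesh_def by auto
  have part1: "\<exists>V\<in>\<T>. - z \<in> pos_cone (convex hull V)"
  proof -
    obtain e where e: "e > 0" "ball 0 e \<subseteq> (\<Union>V\<in>\<T>. convex hull V)"
      using int0 mem_interior by blast
    have nz: "norm z + 1 > 0" by (simp add: add_nonneg_pos)
    define r where "r = e / (2 * (norm z + 1))"
    have r: "r > 0" using e nz by (simp add: r_def)
    have "r * norm z < e"
    proof -
      have en: "0 \<le> e * norm z" using e by simp
      have "2 * e * (norm z + 1) = 2 * (e * norm z) + 2 * e" by (simp add: algebra_simps)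
      then have "e * norm z < 2 * e * (norm z + 1)" using e en by linarith
      then show ?thesis using nz unfolding r_def by (simp add: field_simps)
    qed
    then have "r *\<^sub>R (- z) \<in> ball 0 e" using r by simp
    then obtain V where V: "V \<in> \<T>" "r *\<^sub>R (- z) \<in> convex hull V" using e by blast
    have "- z = (1 / r) *\<^sub>R (r *\<^sub>R (- z))" using r by simp
    then have "- z \<in> pos_cone (convex hull V)"
      unfolding pos_cone_def using V r by (intro CollectI exI[of _ "1/r"] exI[of _ "r *\<^sub>R (- z)"]) auto
    then show ?thesis using V by blast
  qed
  have part2: "\<exists>\<beta> :: real^'n \<Rightarrow> nat. z + (\<Sum>v\<in>V - {0}. real (\<beta> v) *\<^sub>R v) = 0"
    if V: "V \<in> \<T>" and zc: "- z \<in> pos_cone (convex hull V)" for V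
  proof -
    obtain r x where rx: "r \<ge> 0" "x \<in> convex hull V" "- z = r *\<^sub>R x"
      using zc unfolding pos_cone_def by blast
    have simp: "is_simplex_verts V" using conf V unfolding conforming_mesh_def by blast
    then have finV: "finite V" and cardV: "card V = CARD('n) + 1"
      unfolding is_simplex_verts_def by auto
    have V0: "0 \<in> V" using zero V by blast
    have intV: "\<forall>v\<in>V. integer_vec v" and volV: "measure lebesgue (convex hull V) = 1 / fact CARD('n)"
      using vol V by auto
    obtain u where u: "\<forall>v\<in>V. 0 \<le> u v" "sum u V = 1" "(\<Sum>v\<in>V. u v *\<^sub>R v) = x"
      using rx(2) convex_hull_finite[OF finV] by blast
    define c where "c v = r * u v" for v
    define B where "B = V - {0}"
    have finB: "finite B" using finV by (simp add: B_def)
    have cardB: "card B = CARD('n)" using cardV V0 finV by (simp add: B_def card_Diff_singleton)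
    have zsum: "- z = (\<Sum>v\<in>B. c v *\<^sub>R v)"
    proof -
      have "- z = (\<Sum>v\<in>V. c v *\<^sub>R v)"
        using rx(3) u(3)[symmetric] by (simp add: c_def scaleR_sum_right)
      also have "\<dots> = c 0 *\<^sub>R 0 + (\<Sum>v\<in>V - {0}. c v *\<^sub>R v)"
        by (rule sum.remove[OF finV V0])
      finally show ?thesis by (simp add: B_def)
    qed
    have cnn: "c v \<ge> 0" if "v \<in> B" for v
      using that rx(1) u(1) by (simp add: c_def B_def)
    obtain g where g: "bij_betw g (UNIV :: 'n wo set) B"
      using finite_same_card_bij[of "UNIV :: 'n wo set" B] finB cardB card_wo by auto
    define W where "W = phi ` V"
    have finW: "finite W" using finV by (simp add: W_def)
    have cardW: "card W = Suc CARD('n wo)"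
    proof -
      have "card (phi ` V) = card V" by (rule card_image) (rule inj_on_subset[OF inj_phi subset_UNIV])
      then show ?thesis using cardV card_wo[where 'n='n] by (simp add: W_def)
    qed
    have phi0: "phi 0 = 0" by (simp add: vec_eq_iff)
    have W0: "0 \<in> W" using V0 phi0 unfolding W_def by force
    have WB: "W - {0} = phi ` B"
    proof -
      have ph: "phi v = 0 \<longleftrightarrow> v = 0" for v :: "real^'n"
      proof
        assume "phi v = 0"
        then have "psi (phi v) = psi (phi 0)" by (simp only: phi0)
        then show "v = 0" by (simp only: psi_phi)
      qed (simp add: phi0)
      show ?thesis unfolding W_def B_def using ph by auto
    qed
    have bij: "bij_betw (phi \<circ> g) UNIV (W - {0})"
      unfolding WB
      by (rule bij_betw_trans[OF g inj_on_imp_bij_betw[OF inj_on_subset[OF inj_phi subset_UNIV]]])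
    define A where "A = ((\<chi> i j. phi (g j) $ i) :: real^'n wo^'n wo)"
    have cs: "measure lborel (convex hull W) = \<bar>det A\<bar> / fact CARD('n wo)"
    proof -
      have "measure lborel (convex hull W) = \<bar>det (\<chi> i j. (phi \<circ> g) j $ i - (0::real^'n wo) $ i)\<bar> / fact CARD('n wo)"
        by (rule content_simplex[OF finW cardW W0 bij])
      also have "(\<chi> i j. (phi \<circ> g) j $ i - (0::real^'n wo) $ i) = A"
        by (simp add: A_def)
      finally show ?thesis .
    qed
    have cborel: "convex hull V \<in> sets borel"
      by (intro borel_closed compact_imp_closed finite_imp_compact_convex_hull finV)
    have "measure lborel (convex hull W) = measure lborel (convex hull V)"
    proof -
      have "convex hull W = phi ` (convex hull V)"
        unfolding W_def by (rule convex_hull_linear_image[OF linear_phi, symmetric])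
      then show ?thesis using measure_phi[OF cborel] by simp
    qed
    also have "\<dots> = 1 / fact CARD('n)"
      using volV measure_completion[of "convex hull V" lborel] cborel by simp
    finally have "\<bar>det A\<bar> = 1" using cs card_wo[where 'n='n] by simp
    then have detA: "det A = 1 \<or> det A = -1" by linarith
    define y where "y = ((\<chi> j. c (g j)) :: real^'n wo)"
    have Ay: "A *v y = phi (- z)"
    proof -
      have "(A *v y) $ i = phi (- z) $ i" for i
      proof -
        have "(A *v y) $ i = (\<Sum>j\<in>UNIV. c (g j) * g j $ Rep_wo i)"
          by (simp add: matrix_vector_mult_def A_def y_def mult.commute)
        also have "\<dots> = (\<Sum>v\<in>B. c v * v $ Rep_wo i)"
          using sum.reindex_bij_betw[OF g, of "\<lambda>v. c v * v $ Rep_wo i"] by simp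
        also have "\<dots> = phi (- z) $ i"
          unfolding zsum by simp
        finally show ?thesis .
      qed
      then show ?thesis by (simp add: vec_eq_iff)
    qed
    have yint: "y $ k \<in> \<int>" for k
    proof -
      have "det (\<chi> i j. if j = k then (A *v y) $ i else A $ i $ j) \<in> \<int>"
      proof (rule det_Ints)
        fix i j
        have zi: "z $ Rep_wo i \<in> \<int>" using assms(3) unfolding integer_vec_def by blast
        have "g j \<in> V" using g unfolding bij_betw_def B_def by auto
        then have gi: "g j $ Rep_wo i \<in> \<int>" using intV unfolding integer_vec_def by blast
        show "(\<chi> i j. if j = k then (A *v y) $ i else A $ i $ j) $ i $ j \<in> \<int>"
        proof -
          have 1: "(A *v y) $ i \<in> \<int>" using zi by (simp add: Ay)
          have 2: "A $ i $ j \<in> \<int>" using gi by (simp add: A_def)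
          show ?thesis using 1 2 by simp
        qed
      qed
      then have "y $ k * det A \<in> \<int>" by (simp add: cramer_lemma)
      then show ?thesis using detA by (auto simp: minus_in_Ints_iff)
    qed
    have cint: "c v \<in> \<int>" if vB: "v \<in> B" for v
    proof -
      obtain k where "v = g k" using g vB unfolding bij_betw_def by auto
      then show ?thesis using yint[of k] by (simp add: y_def)
    qed
    define \<beta> where "\<beta> v = nat \<lfloor>c v\<rfloor>" for v
    have "real (\<beta> v) = c v" if "v \<in> B" for v
    proof -
      from cint[OF that] obtain m where m: "c v = of_int m" by (auto elim: Ints_cases)
      then show ?thesis using cnn[OF that] by (simp add: \<beta>_def)
    qed
    then have "(\<Sum>v\<in>B. real (\<beta> v) *\<^sub>R v) = (\<Sum>v\<in>B. c v *\<^sub>R v)"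
      by (intro sum.cong) auto
    then have "z + (\<Sum>v\<in>V - {0}. real (\<beta> v) *\<^sub>R v) = 0"
      using zsum by (simp add: B_def) (metis add.right_inverse minus_minus)
    then show ?thesis by blast
  qed
  show ?thesis using part1 part2 by blast
qed

end
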